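(* Let $R$ be a quotient root system with positive roots $R^+$, let $\Phi\subseteq R^+$ be an inversion set, and let $\Phi = \Phi_1 \sqcup \cdots \sqcup \Phi_r$ where $\Phi_1,\dots,\Phi_r$ are non-empty pairwise disjoint inversion sets. Then for each $1 \leq k \leq r$, the set $\Phi_1 \sqcup \cdots \sqcup \Phi_k$ is an inversion set.
   Context: A quotient root system (QRS) $R$ is the set of non-zero images of a root system $\Delta$ (with base $\Sigma$) under the orthogonal projection of its ambient Euclidean space onto $(\mathrm{span}\,J)^\perp$ for some $J\subsetneq\Sigma$; its base consists of the images of $\Sigma\setminus J$, and every root is an integer combination of the base with all coefficients $\ge0$ (positive roots, $R^+$) or all $\le0$. A subset $\Phi\subseteq R^+$ is closed if $\alpha,\beta\in\Phi$ and $\alpha+\beta\in R$ imply $\alpha+\beta\in\Phi$; co-closed if its complement $R^+\setminus\Phi$ is closed; an inversion set if it is both closed and co-closed. *)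

theory Defs
  imports "HOL-Analysis.Analysis"
begin

definition root_system :: "'a::euclidean_space set \<Rightarrow> bool" where
  "root_system \<Delta> \<longleftrightarrow>
     finite \<Delta> \<and> 0 \<notin> \<Delta> \<and> span \<Delta> = UNIV \<and>
     (\<forall>\<alpha>\<in>\<Delta>. \<forall>\<beta>\<in>\<Delta>. \<beta> - (2 * (\<beta> \<bullet> \<alpha>) / (\<alpha> \<bullet> \<alpha>)) *\<^sub>R \<alpha> \<in> \<Delta>) \<and>
     (\<forall>\<alpha>\<in>\<Delta>. \<forall>\<beta>\<in>\<Delta>. 2 * (\<beta> \<bullet> \<alpha>) / (\<alpha> \<bullet> \<alpha>) \<in> \<int>) \<and>
     (\<forall>\<alpha>\<in>\<Delta>. \<forall>c::real. c *\<^sub>R \<alpha> \<in> \<Delta> \<longrightarrow> c = 1 \<or> c = -1)"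

definition root_base :: "'a::euclidean_space set \<Rightarrow> 'a set \<Rightarrow> bool" where
  "root_base \<Delta> \<Sigma> \<longleftrightarrow>
     \<Sigma> \<subseteq> \<Delta> \<and> independent \<Sigma> \<and>
     (\<forall>\<beta>\<in>\<Delta>. \<exists>c::'a \<Rightarrow> int. \<beta> = (\<Sum>\<sigma>\<in>\<Sigma>. of_int (c \<sigma>) *\<^sub>R \<sigma>) \<and>
        ((\<forall>\<sigma>\<in>\<Sigma>. c \<sigma> \<ge> 0) \<or> (\<forall>\<sigma>\<in>\<Sigma>. c \<sigma> \<le> 0)))"

definition perp_proj :: "'a::euclidean_space set \<Rightarrow> 'a \<Rightarrow> 'a" where
  "perp_proj J x = (THE y. (\<forall>u\<in>span J. y \<bullet> u = 0) \<and> x - y \<in> span J)"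

definition qrs_roots :: "'a::euclidean_space set \<Rightarrow> 'a set \<Rightarrow> 'a set" where
  "qrs_roots \<Delta> J = {perp_proj J \<beta> | \<beta>. \<beta> \<in> \<Delta> \<and> perp_proj J \<beta> \<noteq> 0}"

definition qrs_pos :: "'a::euclidean_space set \<Rightarrow> 'a set \<Rightarrow> 'a set \<Rightarrow> 'a set" where
  "qrs_pos \<Delta> \<Sigma> J = {\<gamma> \<in> qrs_roots \<Delta> J. \<exists>c::'a \<Rightarrow> int.
      \<gamma> = (\<Sum>\<sigma>\<in>\<Sigma> - J. of_int (c \<sigma>) *\<^sub>R perp_proj J \<sigma>) \<and> (\<forall>\<sigma>\<in>\<Sigma> - J. c \<sigma> \<ge> 0)}"

definition closed_in_roots :: "'a::euclidean_space set \<Rightarrow> 'a set \<Rightarrow> bool" where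
  "closed_in_roots R \<Phi> \<longleftrightarrow> (\<forall>\<alpha>\<in>\<Phi>. \<forall>\<beta>\<in>\<Phi>. \<alpha> + \<beta> \<in> R \<longrightarrow> \<alpha> + \<beta> \<in> \<Phi>)"

definition inversion_set :: "'a::euclidean_space set \<Rightarrow> 'a set \<Rightarrow> 'a set \<Rightarrow> bool" where
  "inversion_set R Rp \<Phi> \<longleftrightarrow> \<Phi> \<subseteq> Rp \<and> closed_in_roots R \<Phi> \<and> closed_in_roots R (Rp - \<Phi>)"

end

theory Submission
  imports Defs
begin

lemma qrs_pos_add:
  assumes "a \<in> qrs_pos D S J" "b \<in> qrs_pos D S J" "a + b \<in> qrs_roots D J"
  shows "a + b \<in> qrs_pos D S J"
proof -
  obtain c where c: "a = (\<Sum>\<sigma>\<in>S - J. of_int (c \<sigma>) *\<^sub>R perp_proj J \<sigma>)" "\<forall>\<sigma>\<in>S - J. c \<sigma> \<ge> 0"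
    using assms(1) unfolding qrs_pos_def by blast
  obtain d where d: "b = (\<Sum>\<sigma>\<in>S - J. of_int (d \<sigma>) *\<^sub>R perp_proj J \<sigma>)" "\<forall>\<sigma>\<in>S - J. d \<sigma> \<ge> 0"
    using assms(2) unfolding qrs_pos_def by blast
  have "a + b = (\<Sum>\<sigma>\<in>S - J. of_int ((\<lambda>s. c s + d s) \<sigma>) *\<^sub>R perp_proj J \<sigma>)"
    unfolding c d by (simp add: sum.distrib[symmetric] scaleR_add_left)
  moreover have "\<forall>\<sigma>\<in>S - J. (\<lambda>s. c s + d s) \<sigma> \<ge> 0" using c d by auto
  ultimately show ?thesis using assms(3) unfolding qrs_pos_def
    by (intro CollectI conjI exI[of _ "\<lambda>s. c s + d s"]) auto
qed

theorem proposition1p7: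
  fixes \<Delta> \<Sigma> J :: "'a::euclidean_space set"
    and \<Phi> :: "'a set" and Ps :: "nat \<Rightarrow> 'a set" and r :: nat
  assumes "root_system \<Delta>" and "root_base \<Delta> \<Sigma>" and "J \<subset> \<Sigma>"
    and "inversion_set (qrs_roots \<Delta> J) (qrs_pos \<Delta> \<Sigma> J) \<Phi>"
    and "\<forall>i\<in>{1..r}. Ps i \<noteq> {} \<and> inversion_set (qrs_roots \<Delta> J) (qrs_pos \<Delta> \<Sigma> J) (Ps i)"
    and "\<forall>i\<in>{1..r}. \<forall>j\<in>{1..r}. i \<noteq> j \<longrightarrow> Ps i \<inter> Ps j = {}"
    and "\<Phi> = (\<Union>i\<in>{1..r}. Ps i)"
  shows "\<forall>k\<in>{1..r}. inversion_set (qrs_roots \<Delta> J) (qrs_pos \<Delta> \<Sigma> J) (\<Union>i\<in>{1..k}. Ps i)"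
proof
  fix k assume k: "k \<in> {1..r}"
  let ?R = "qrs_roots \<Delta> J" and ?P = "qrs_pos \<Delta> \<Sigma> J"
  have inv: "\<And>i. i \<in> {1..r} \<Longrightarrow> Ps i \<subseteq> ?P \<and> closed_in_roots ?R (Ps i) \<and> closed_in_roots ?R (?P - Ps i)"
    using assms(5) unfolding inversion_set_def by blast
  have Phi: "\<Phi> \<subseteq> ?P" "closed_in_roots ?R \<Phi>"
    using assms(4) unfolding inversion_set_def by auto
  have sub: "(\<Union>i\<in>{1..k}. Ps i) \<subseteq> ?P" using inv k by force
  have cl: "closed_in_roots ?R (\<Union>i\<in>{1..k}. Ps i)"
    unfolding closed_in_roots_def
  proof (intro ballI impI)
    fix a b assume a: "a \<in> (\<Union>i\<in>{1..k}. Ps i)" and b: "b \<in> (\<Union>i\<in>{1..k}. Ps i)" and ab: "a + b \<in> ?R"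
    obtain i where i: "i \<in> {1..k}" "a \<in> Ps i" using a by blast
    obtain j where j: "j \<in> {1..k}" "b \<in> Ps j" using b by blast
    have "a \<in> \<Phi>" "b \<in> \<Phi>" using i j k assms(7) by auto
    then have "a + b \<in> \<Phi>" using Phi(2) ab unfolding closed_in_roots_def by blast
    then obtain m where m: "m \<in> {1..r}" "a + b \<in> Ps m" using assms(7) by blast
    show "a + b \<in> (\<Union>i\<in>{1..k}. Ps i)"
    proof (cases "m = i \<or> m = j")
      case True then show ?thesis using m i j by auto
    next
      case False
      have i1: "i \<in> {1..r}" and j1: "j \<in> {1..r}" using i j k by auto
      have "Ps i \<inter> Ps m = {}" "Ps j \<inter> Ps m = {}" using assms(6) i1 j1 m(1) False by auto
      then have "a \<in> ?P - Ps m" "b \<in> ?P - Ps m" using i j inv[OF i1] inv[OF j1] by auto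
      then have "a + b \<in> ?P - Ps m" using inv[OF m(1)] ab unfolding closed_in_roots_def by blast
      then show ?thesis using m by blast
    qed
  qed
  have co: "closed_in_roots ?R (?P - (\<Union>i\<in>{1..k}. Ps i))"
    unfolding closed_in_roots_def
  proof (intro ballI impI)
    fix a b assume a: "a \<in> ?P - (\<Union>i\<in>{1..k}. Ps i)" and b: "b \<in> ?P - (\<Union>i\<in>{1..k}. Ps i)" and ab: "a + b \<in> ?R"
    have abP: "a + b \<in> ?P" using qrs_pos_add a b ab by blast
    show "a + b \<in> ?P - (\<Union>i\<in>{1..k}. Ps i)"
    proof (rule ccontr)
      assume "a + b \<notin> ?P - (\<Union>i\<in>{1..k}. Ps i)"
      then obtain m where m: "m \<in> {1..k}" "a + b \<in> Ps m" using abP by blast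
      have m1: "m \<in> {1..r}" using m k by auto
      have "a \<in> ?P - Ps m" "b \<in> ?P - Ps m" using a b m by auto
      then have "a + b \<in> ?P - Ps m" using inv[OF m1] ab unfolding closed_in_roots_def by blast
      then show False using m by blast
    qed
  qed
  show "inversion_set ?R ?P (\<Union>i\<in>{1..k}. Ps i)"
    unfolding inversion_set_def using sub cl co by blast
qed

end
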